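(* Let $\{\mathbf{k}^{(N)}\}_{N\ge1}$ be a sequence with $\mathbf{k}^{(N)}=(k_1^{(N)},\dots,k_N^{(N)})\in\Delta_N$, and let $\mathbf{k}\in\Delta_0$ be such that $\lim_{N\to\infty,N\ge j}k_j^{(N)}=k_j$ for every $j\ge1$. Then for every $i\ge1$, $l_i(\mathbf{k}^{(N)})\to l_i(\mathbf{k})$ and $\sum_{j=i}^\infty l_j(\mathbf{k}^{(N)})\to\sum_{j=i}^\infty l_j(\mathbf{k})$ as $N\to\infty$.
   Context: $\Delta_N=\{(k_1,\dots,k_N)\in(\mathbb{Z}\cup\{-\infty\})^N:k_1\ge\dots\ge k_N\}$; $\Delta_0=\{\mathbf{k}=(k_j)_{j\ge1}\in\mathbb{Z}_+^{\mathbb{N}}:k_1\ge k_2\ge\cdots,\ k_i=0\text{ for all large }i\}$, where $\mathbb{Z}_+=\{0,1,2,\dots\}$. For a finite or infinite sequence $\mathbf{k}$ and $i\in\mathbb{Z}\cup\{-\infty\}$, $l_i(\mathbf{k})=\#\{j:k_j=i\}$. *)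

theory Defs
  imports "HOL-Analysis.Analysis"
begin

text \<open>Elements of Z \<union> {-\<infinity>} are represented as extended reals that are either
  -\<infinity> or (the image of) an integer. A finite sequence (k_1,...,k_N) is a function
  on indices 1..N (values at other indices are irrelevant).\<close>

definition is_int_or_minf :: "ereal \<Rightarrow> bool" where
  "is_int_or_minf x \<longleftrightarrow> x = -\<infinity> \<or> (\<exists>z::int. x = ereal (of_int z))"

definition in_DeltaN :: "nat \<Rightarrow> (nat \<Rightarrow> ereal) \<Rightarrow> bool" where
  "in_DeltaN N k \<longleftrightarrow> (\<forall>j\<in>{1..N}. is_int_or_minf (k j)) \<and>
     (\<forall>j1 j2. 1 \<le> j1 \<and> j1 \<le> j2 \<and> j2 \<le> N \<longrightarrow> k j2 \<le> k j1)"

definition in_Delta0 :: "(nat \<Rightarrow> int) \<Rightarrow> bool" where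
  "in_Delta0 k \<longleftrightarrow> (\<forall>j\<ge>1. 0 \<le> k j) \<and>
     (\<forall>j1 j2. 1 \<le> j1 \<and> j1 \<le> j2 \<longrightarrow> k j2 \<le> k j1) \<and>
     (\<exists>M. \<forall>j\<ge>M. k j = 0)"

definition mult_N :: "nat \<Rightarrow> (nat \<Rightarrow> ereal) \<Rightarrow> int \<Rightarrow> nat" where
  "mult_N N k i = card {j\<in>{1..N}. k j = ereal (of_int i)}"

definition mult_0 :: "(nat \<Rightarrow> int) \<Rightarrow> int \<Rightarrow> nat" where
  "mult_0 k i = card {j. 1 \<le> j \<and> k j = i}"

end

theory Submission
  imports Defs
begin

lemma ev_eq_int:
  fixes f :: "nat \<Rightarrow> ereal" and c :: int
  assumes lim: "f \<longlonglongrightarrow> ereal (of_int c)"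
    and int: "\<And>N. N \<ge> j \<Longrightarrow> is_int_or_minf (f N)"
  shows "eventually (\<lambda>N. f N = ereal (of_int c)) sequentially"
proof -
  have op: "open {ereal (of_int c - 1/2)<..<ereal (of_int c + 1/2)}" by simp
  have "ereal (of_int c) \<in> {ereal (of_int c - 1/2)<..<ereal (of_int c + 1/2)}" by simp
  from topological_tendstoD[OF lim op this]
  have e1: "eventually (\<lambda>N. f N \<in> {ereal (of_int c - 1/2)<..<ereal (of_int c + 1/2)}) sequentially" .
  have e2: "eventually (\<lambda>N. N \<ge> j) sequentially" by (rule eventually_ge_at_top)
  show ?thesis using e1 e2
  proof eventually_elim
    case (elim N)
    from int[OF elim(2)] have "f N = -\<infinity> \<or> (\<exists>z::int. f N = ereal (of_int z))"
      unfolding is_int_or_minf_def .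
    moreover have "f N \<noteq> -\<infinity>" using elim(1) by auto
    ultimately obtain z :: int where z: "f N = ereal (of_int z)" by blast
    with elim(1) have "of_int c - 1/2 < (of_int z::real)" "(of_int z::real) < of_int c + 1/2" by auto
    hence "z = c" by linarith
    thus ?case using z by simp
  qed
qed

lemma key:
  fixes kN :: "nat \<Rightarrow> nat \<Rightarrow> ereal" and k :: "nat \<Rightarrow> int"
  assumes a1: "\<And>N. N \<ge> 1 \<Longrightarrow> in_DeltaN N (kN N)"
    and a2: "in_Delta0 k"
    and a3: "\<And>j. j \<ge> 1 \<Longrightarrow> (\<lambda>N. kN N j) \<longlonglongrightarrow> ereal (of_int (k j))"
  shows "eventually (\<lambda>N. \<forall>i::int. i \<ge> 1 \<longrightarrow> mult_N N (kN N) i = mult_0 k i) sequentially"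
proof -
  obtain M0 where M0: "\<forall>j\<ge>M0. k j = 0" using a2 unfolding in_Delta0_def by blast
  define M where "M = max M0 1"
  have M: "\<forall>j\<ge>M. k j = 0" "M \<ge> 1" using M0 unfolding M_def by auto
  have "\<forall>j\<in>{1..M}. eventually (\<lambda>N. kN N j = ereal (of_int (k j))) sequentially"
  proof
    fix j assume j: "j \<in> {1..M}"
    show "eventually (\<lambda>N. kN N j = ereal (of_int (k j))) sequentially"
    proof (rule ev_eq_int[where j = j])
      show "(\<lambda>N. kN N j) \<longlonglongrightarrow> ereal (of_int (k j))" using a3 j by auto
      fix N assume "N \<ge> j"
      thus "is_int_or_minf (kN N j)" using a1[of N] j unfolding in_DeltaN_def by auto
    qed
  qed
  hence e1: "eventually (\<lambda>N. \<forall>j\<in>{1..M}. kN N j = ereal (of_int (k j))) sequentially"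
    by (simp add: eventually_ball_finite)
  have e2: "eventually (\<lambda>N. N \<ge> M) sequentially" by (rule eventually_ge_at_top)
  show ?thesis using e1 e2
  proof eventually_elim
    case (elim N)
    have NM: "N \<ge> 1" using elim(2) M(2) by simp
    have mono: "\<And>j1 j2. 1 \<le> j1 \<Longrightarrow> j1 \<le> j2 \<Longrightarrow> j2 \<le> N \<Longrightarrow> kN N j2 \<le> kN N j1"
      using a1[OF NM] unfolding in_DeltaN_def by blast
    have kM: "kN N M = ereal 0" using elim(1) M by auto
    show ?case
    proof (intro allI impI)
      fix i :: int assume i: "i \<ge> 1"
      have "{j\<in>{1..N}. kN N j = ereal (of_int i)} = {j. 1 \<le> j \<and> k j = i}"
      proof (intro set_eqI iffI)
        fix j assume j: "j \<in> {j\<in>{1..N}. kN N j = ereal (of_int i)}"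
        show "j \<in> {j. 1 \<le> j \<and> k j = i}"
        proof (cases "j \<le> M")
          case True
          thus ?thesis using j elim(1) by auto
        next
          case False
          hence "kN N j \<le> kN N M" using mono[of M j] j M(2) by auto
          thus ?thesis using j kM i by auto
        qed
      next
        fix j assume j: "j \<in> {j. 1 \<le> j \<and> k j = i}"
        have "j < M"
        proof (rule ccontr)
          assume "\<not> j < M"
          hence "k j = 0" using M(1) by simp
          thus False using j i by simp
        qed
        thus "j \<in> {j\<in>{1..N}. kN N j = ereal (of_int i)}" using j elim by auto
      qed
      thus "mult_N N (kN N) i = mult_0 k i" unfolding mult_N_def mult_0_def by simp
    qed
  qed
qed

theorem lemma3p10:
  fixes kN :: "nat \<Rightarrow> nat \<Rightarrow> ereal" and k :: "nat \<Rightarrow> int"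
  assumes "\<And>N. N \<ge> 1 \<Longrightarrow> in_DeltaN N (kN N)"
    and "in_Delta0 k"
    and "\<And>j. j \<ge> 1 \<Longrightarrow> (\<lambda>N. kN N j) \<longlonglongrightarrow> ereal (of_int (k j))"
  shows "\<forall>i::int. i \<ge> 1 \<longrightarrow>
           (\<lambda>N. real (mult_N N (kN N) i)) \<longlonglongrightarrow> real (mult_0 k i) \<and>
           (\<lambda>N. \<Sum>n. real (mult_N N (kN N) (i + int n)))
              \<longlonglongrightarrow> (\<Sum>n. real (mult_0 k (i + int n)))"
proof (intro allI impI conjI)
  fix i :: int assume i: "i \<ge> 1"
  have ev: "eventually (\<lambda>N. \<forall>i::int. i \<ge> 1 \<longrightarrow> mult_N N (kN N) i = mult_0 k i) sequentially"
    by (rule key[OF assms])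
  show "(\<lambda>N. real (mult_N N (kN N) i)) \<longlonglongrightarrow> real (mult_0 k i)"
  proof (rule tendsto_eventually)
    show "eventually (\<lambda>N. real (mult_N N (kN N) i) = real (mult_0 k i)) sequentially"
      using ev by eventually_elim (use i in auto)
  qed
  show "(\<lambda>N. \<Sum>n. real (mult_N N (kN N) (i + int n))) \<longlonglongrightarrow> (\<Sum>n. real (mult_0 k (i + int n)))"
  proof (rule tendsto_eventually)
    show "eventually (\<lambda>N. (\<Sum>n. real (mult_N N (kN N) (i + int n))) = (\<Sum>n. real (mult_0 k (i + int n)))) sequentially"
      using ev by eventually_elim (use i in auto)
  qed
qed

end
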